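(* Let $X_1,\dots,X_n$ be a Hall–Grayson–Grossman basis of vector fields on $\mathbb{R}^n$ (for the free nilpotent Lie algebra of rank $r\ge2$ and step $s\ge2$), and let $\Psi(x)=e^{x_1X_1}\circ e^{x_2X_2}\circ\cdots\circ e^{x_nX_n}(0)$, where $e^{tX}$ denotes the flow of the vector field $X$ at time $t$. Then $\Psi(x)=x$ for all $x\in\mathbb{R}^n$.
   Context: Multi-indices $\mathbb{N}^n$: $|\alpha|$, $\alpha!$, $x^\alpha$. Hall basis of the free nilpotent Lie algebra $\mathfrak g$ (rank $r$, step $s$, dimension $n$): take a basis $X_1,\dots,X_r$ of the first layer (degree 1); inductively the degree-$d$ elements are brackets $[X_i,X_j]$ of earlier elements with $i>j$, $d(i)+d(j)=d$, and, if $X_i$ was constructed as $[X_h,X_k]$, then $k\le j$; list them after lower-degree elements. Strings: $(\ell)$ for $\ell\le r$; for $X_\ell=[X_a,X_b]$, the string of $a$ followed by $b$. With string $(\ell_0,\dots,\ell_h)$, $I(\ell)_j=\#\{1\le p\le h:\ell_p=j\}$; $j\prec\ell$ iff the string of $j$ is an initial segment of that of $\ell$. The Hall–Grayson–Grossman basis is the family of vector fields on $\mathbb{R}^n$ given by $X_i=\sum_{\ell:\,i\prec\ell}\frac{(-1)^{|I(\ell)|}}{I(\ell)!}x^{I(\ell)}\frac{\partial}{\partial x_\ell}$ for $i=1,\dots,r$, and, for $\ell>r$ with $X_\ell$ constructed in the Hall algorithm as $[X_a,X_b]$, $X_\ell=[X_a,X_b]$ (Lie bracket of vector fields). *)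

theory Defs
  imports "HOL-Analysis.Analysis"
begin

text \<open>Points of R^n are functions nat => real; only coordinates 1..n are meaningful.
  Vector fields are maps from points to points (the vector of components).\<close>

type_synonym point = "nat \<Rightarrow> real"
type_synonym vfield = "point \<Rightarrow> point"

text \<open>Hall basis data: for an index l with r < l, P l = (a, b) means X_l = [X_a, X_b].\<close>

fun hall_string :: "nat \<Rightarrow> (nat \<Rightarrow> nat \<times> nat) \<Rightarrow> nat \<Rightarrow> nat list" where
  "hall_string r P l =
     (if l \<le> r then [l]
      else if fst (P l) < l then hall_string r P (fst (P l)) @ [snd (P l)] else [])"

fun hall_deg :: "nat \<Rightarrow> (nat \<Rightarrow> nat \<times> nat) \<Rightarrow> nat \<Rightarrow> nat" where
  "hall_deg r P l =
     (if l \<le> r then 1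
      else if fst (P l) < l \<and> snd (P l) < l
           then hall_deg r P (fst (P l)) + hall_deg r P (snd (P l)) else 0)"

definition hall_pairs :: "nat \<Rightarrow> nat \<Rightarrow> nat \<Rightarrow> (nat \<Rightarrow> nat \<times> nat) \<Rightarrow> (nat \<times> nat) set" where
  "hall_pairs r s n P =
     {(i, j). 1 \<le> j \<and> j < i \<and> i \<le> n \<and> hall_deg r P i + hall_deg r P j \<le> s
              \<and> (r < i \<longrightarrow> snd (P i) \<le> j)}"

text \<open>P, n describe (an enumeration of) the Hall basis of the free nilpotent Lie algebra
  of rank r and step s: indices 1..r are the generators; indices r+1..n are brackets
  of earlier elements, in bijection with all admissible Hall pairs; elements are listed
  by nondecreasing degree (the order within a degree is arbitrary).\<close>

definition hall_basis :: "nat \<Rightarrow> nat \<Rightarrow> nat \<Rightarrow> (nat \<Rightarrow> nat \<times> nat) \<Rightarrow> bool" where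
  "hall_basis r s n P \<longleftrightarrow>
     r \<le> n \<and>
     (\<forall>l\<in>{r<..n}. snd (P l) < fst (P l) \<and> fst (P l) < l) \<and>
     bij_betw P {r<..n} (hall_pairs r s n P) \<and>
     (\<forall>l l'. 1 \<le> l \<and> l < l' \<and> l' \<le> n \<longrightarrow> hall_deg r P l \<le> hall_deg r P l')"

text \<open>Multi-index I(l): I(l)_j = number of p in 1..h with l_p = j, for string (l_0,...,l_h).\<close>

definition hall_I :: "nat \<Rightarrow> (nat \<Rightarrow> nat \<times> nat) \<Rightarrow> nat \<Rightarrow> nat \<Rightarrow> nat" where
  "hall_I r P l j = length (filter (\<lambda>q. q = j) (tl (hall_string r P l)))"

definition hall_prec :: "nat \<Rightarrow> (nat \<Rightarrow> nat \<times> nat) \<Rightarrow> nat \<Rightarrow> nat \<Rightarrow> bool" where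
  "hall_prec r P j l \<longleftrightarrow>
     take (length (hall_string r P j)) (hall_string r P l) = hall_string r P j"

definition hgg_gen :: "nat \<Rightarrow> nat \<Rightarrow> (nat \<Rightarrow> nat \<times> nat) \<Rightarrow> nat \<Rightarrow> vfield" where
  "hgg_gen r n P i x = (\<lambda>l.
     if 1 \<le> l \<and> l \<le> n \<and> hall_prec r P i l then
       (-1) ^ (\<Sum>j=1..n. hall_I r P l j) / (\<Prod>j=1..n. fact (hall_I r P l j))
         * (\<Prod>j=1..n. x j ^ hall_I r P l j)
     else 0)"

definition pdiff :: "nat \<Rightarrow> (point \<Rightarrow> real) \<Rightarrow> point \<Rightarrow> real" where
  "pdiff k f x = deriv (\<lambda>t. f (x(k := t))) (x k)"

definition lie_bracket :: "nat \<Rightarrow> vfield \<Rightarrow> vfield \<Rightarrow> vfield" where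
  "lie_bracket n A B x = (\<lambda>l.
     \<Sum>k=1..n. A x k * pdiff k (\<lambda>y. B y l) x - B x k * pdiff k (\<lambda>y. A y l) x)"

definition hgg_fields :: "nat \<Rightarrow> nat \<Rightarrow> (nat \<Rightarrow> nat \<times> nat) \<Rightarrow> (nat \<Rightarrow> vfield) \<Rightarrow> bool" where
  "hgg_fields r n P X \<longleftrightarrow>
     (\<forall>i\<in>{1..r}. X i = hgg_gen r n P i) \<and>
     (\<forall>l\<in>{r<..n}. X l = lie_bracket n (X (fst (P l))) (X (snd (P l))))"

definition flow :: "vfield \<Rightarrow> real \<Rightarrow> point \<Rightarrow> point" where
  "flow V t p = (THE q. \<exists>\<gamma>::real \<Rightarrow> point. \<gamma> 0 = p \<and> \<gamma> t = q \<and>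
      (\<forall>\<tau>\<in>{min 0 t..max 0 t}. \<forall>k.
         ((\<lambda>\<sigma>. \<gamma> \<sigma> k) has_real_derivative V (\<gamma> \<tau>) k) (at \<tau> within {min 0 t..max 0 t})))"

definition hgg_Psi :: "nat \<Rightarrow> (nat \<Rightarrow> vfield) \<Rightarrow> point \<Rightarrow> point" where
  "hgg_Psi n X x = foldr (\<lambda>i p. flow (X i) (x i) p) [1..<n+1] (\<lambda>_. 0)"

end

theory Submission
  imports Defs "HOL-Library.Multiset"
begin


declare hall_string.simps[simp del]

locale HB =
  fixes r s n :: nat and P :: "nat \<Rightarrow> nat \<times> nat" and X :: "nat \<Rightarrow> vfield"
  assumes hb: "hall_basis r s n P" and hf: "hgg_fields r n P X"
begin

abbreviation hs where "hs l \<equiv> hall_string r P l"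
abbreviation cnt where "cnt l j \<equiv> hall_I r P l j"

lemma rn: "r \<le> n" using hb unfolding hall_basis_def by auto

lemma pair_facts:
  assumes "r < l" "l \<le> n"
  shows "snd (P l) < fst (P l)" "fst (P l) < l" "1 \<le> snd (P l)"
    "r < fst (P l) \<Longrightarrow> snd (P (fst (P l))) \<le> snd (P l)"
proof -
  have "P l \<in> hall_pairs r s n P"
    using hb assms unfolding hall_basis_def bij_betw_def by auto
  then show "1 \<le> snd (P l)" "r < fst (P l) \<Longrightarrow> snd (P (fst (P l))) \<le> snd (P l)"
    unfolding hall_pairs_def by (auto simp: case_prod_beta)
  show "snd (P l) < fst (P l)" "fst (P l) < l"
    using hb assms unfolding hall_basis_def by auto
qed

lemma injP: "inj_on P {r<..n}"
  using hb unfolding hall_basis_def bij_betw_def by auto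

lemma hs_gen: "l \<le> r \<Longrightarrow> hs l = [l]"
  by (subst hall_string.simps) simp

lemma hs_br: "r < l \<Longrightarrow> l \<le> n \<Longrightarrow> hs l = hs (fst (P l)) @ [snd (P l)]"
  using pair_facts(2)[of l] by (subst hall_string.simps) simp

lemma hs_props:
  "1 \<le> l \<Longrightarrow> l \<le> n \<Longrightarrow> hs l \<noteq> [] \<and> (\<forall>q\<in>set (tl (hs l)). 1 \<le> q \<and> q < l)
     \<and> sorted (tl (hs l)) \<and> (r < l \<longrightarrow> (\<forall>q\<in>set (tl (hs l)). q \<le> snd (P l)))"
proof (induction l rule: less_induct)
  case (less l)
  show ?case
  proof (cases "l \<le> r")
    case True then show ?thesis by (simp add: hs_gen)
  next
    case False
    define a b where "a = fst (P l)" "b = snd (P l)"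
    have f: "b < a" "a < l" "1 \<le> b" "r < a \<Longrightarrow> snd (P a) \<le> b"
      using pair_facts[of l] False less.prems unfolding a_b_def by auto
    have IH: "hs a \<noteq> [] \<and> (\<forall>q\<in>set (tl (hs a)). 1 \<le> q \<and> q < a)
     \<and> sorted (tl (hs a)) \<and> (r < a \<longrightarrow> (\<forall>q\<in>set (tl (hs a)). q \<le> snd (P a)))"
      using less.IH[of a] f less.prems by auto
    have e: "hs l = hs a @ [b]" using hs_br[of l] False less.prems a_b_def by auto
    have t: "tl (hs l) = tl (hs a) @ [b]" using e IH by (cases "hs a") auto
    have le: "\<forall>q\<in>set (tl (hs a)). q \<le> b"
    proof (cases "r < a")
      case True then show ?thesis using IH f by force
    next
      case False then show ?thesis by (simp add: hs_gen)
    qed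
    show ?thesis using t IH f le e a_b_def by (auto simp: sorted_append)
  qed
qed

lemma hs_inj:
  "1 \<le> l \<Longrightarrow> l \<le> n \<Longrightarrow> 1 \<le> l' \<Longrightarrow> l' \<le> n \<Longrightarrow> hs l = hs l' \<Longrightarrow> l = l'"
proof (induction l arbitrary: l' rule: less_induct)
  case (less l)
  have len: "r < k \<Longrightarrow> k \<le> n \<Longrightarrow> length (hs k) \<ge> 2" for k
    using hs_br[of k] hs_props[of "fst (P k)"] pair_facts[of k]
    by (cases "hs (fst (P k))") auto
  show ?case
  proof (cases "l \<le> r")
    case True
    show ?thesis
    proof (cases "l' \<le> r")
      case True then show ?thesis using \<open>l \<le> r\<close> less.prems by (simp add: hs_gen)
    next
      case False
      have "hs l' = [l]" using True less.prems by (simp add: hs_gen)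
      then show ?thesis using False less.prems len[of l'] by simp
    qed
  next
    case False
    show ?thesis
    proof (cases "l' \<le> r")
      case True
      have "hs l = [l']" using True less.prems by (simp add: hs_gen)
      then show ?thesis using False less.prems len[of l] by simp
    next
      case F2: False
      have e1: "hs l = hs (fst (P l)) @ [snd (P l)]" using hs_br[of l] False less.prems by simp
      have e2: "hs l' = hs (fst (P l')) @ [snd (P l')]" using hs_br[of l'] F2 less.prems by simp
      have "hs (fst (P l)) = hs (fst (P l'))" "snd (P l) = snd (P l')"
        using e1 e2 less.prems(5) by auto
      moreover have "fst (P l) = fst (P l')"
        using less.IH[of "fst (P l)" "fst (P l')"] calculation pair_facts[of l] pair_facts[of l']
          False F2 less.prems by auto
      ultimately have "P l = P l'" by (simp add: prod_eq_iff)
      then show ?thesis using injP False F2 less.prems by (auto simp: inj_on_def)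
    qed
  qed
qed

lemma hs_prefix:
  "1 \<le> m \<Longrightarrow> m \<le> n \<Longrightarrow> 1 \<le> l \<Longrightarrow> l \<le> n \<Longrightarrow> hs m = hs l @ z \<Longrightarrow> z \<noteq> [] \<Longrightarrow> hd z < l"
proof (induction m arbitrary: z rule: less_induct)
  case (less m)
  have nl: "hs l \<noteq> []" using hs_props[of l] less.prems(3,4) by blast
  show ?case
  proof (cases "m \<le> r")
    case True
    then have "hs m = [m]" by (simp add: hs_gen)
    then have "length (hs l @ z) = 1" using less.prems(5) by simp
    moreover have "length (hs l) \<noteq> 0" "length z \<noteq> 0" using nl less.prems(6) by auto
    ultimately show ?thesis by simp
  next
    case False
    define a b where "a = fst (P m)" "b = snd (P m)"
    have f: "b < a" "a < m" "1 \<le> b"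
      using pair_facts[of m] False less.prems(2) unfolding a_b_def by auto
    have an: "1 \<le> a" "a \<le> n" using f less.prems(2) by auto
    have e: "hs m = hs a @ [b]" using hs_br[of m] False less.prems(2) unfolding a_b_def by simp
    have eq: "hs l @ z = hs a @ [b]" using trans[OF less.prems(5)[symmetric] e] .
    show ?thesis
    proof (cases "z = [b]")
      case True
      then have "hs a = hs l" using eq by simp
      then have "a = l" using hs_inj[of a l] an less.prems(3,4) by simp
      then show ?thesis using True f by simp
    next
      case False
      define z' where "z' = butlast z"
      have "last (hs l @ z) = b" using eq by simp
      then have lz: "last z = b" using last_appendR[OF less.prems(6)] by simp
      have z1: "z = z' @ [b]" unfolding z'_def
        using append_butlast_last_id[OF less.prems(6)] lz by simp
      have z2: "z' \<noteq> []" using z1 False by auto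
      have "hs a @ [b] = (hs l @ z') @ [b]" using eq z1 by simp
      then have ha: "hs a = hs l @ z'" by simp
      have "hd z' < l" using less.IH[of a z'] f an less.prems(3,4) ha z2 by simp
      then show ?thesis using z1 z2 by simp
    qed
  qed
qed

lemma cnt_mset: "cnt l j = count (mset (tl (hs l))) j"
proof -
  have "length (filter (\<lambda>q. q = j) xs) = count (mset xs) j" for xs :: "nat list"
    by (induction xs) auto
  then show ?thesis unfolding hall_I_def by simp
qed

lemma filter_takeWhile: "sorted t \<Longrightarrow> filter (\<lambda>q. q < (l::nat)) t = takeWhile (\<lambda>q. q < l) t"
proof (induction t)
  case (Cons x xs)
  show ?case
  proof (cases "x < l")
    case True then show ?thesis using Cons by auto
  next
    case False
    then have "\<forall>y\<in>set xs. \<not> y < l" using Cons.prems by auto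
    then show ?thesis using False by (simp add: filter_empty_conv)
  qed
qed simp

lemma K2:
  assumes lm: "1 \<le> l" "l \<le> n" "1 \<le> m" "m \<le> n"
    and hd: "hd (hs m) = hd (hs l)"
    and le: "\<forall>j\<in>{1..n}. cnt l j \<le> cnt m j"
    and st: "\<forall>j\<in>{1..n}. cnt l j < cnt m j \<longrightarrow> l \<le> j"
  shows "m = l"
proof -
  define t u where "t = tl (hs m)" "u = tl (hs l)"
  have pm: "hs m \<noteq> []" "\<forall>q\<in>set t. 1 \<le> q \<and> q < m" "sorted t"
    using hs_props[of m] lm t_u_def by auto
  have pl: "hs l \<noteq> []" "\<forall>q\<in>set u. 1 \<le> q \<and> q < l" "sorted u"
    using hs_props[of l] lm t_u_def by auto
  define w where "w = filter (\<lambda>q. q < l) t"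
  have "mset w = mset u"
  proof (rule multiset_eqI)
    fix j
    have cw: "count (mset w) j = (if j < l then count (mset t) j else 0)"
      unfolding w_def by (simp add: mset_filter)
    show "count (mset w) j = count (mset u) j"
    proof (cases "j < l")
      case False
      then have "j \<notin> set u" using pl by auto
      moreover have "j \<notin> set w" using False w_def by auto
      ultimately show ?thesis by (metis count_mset_0_iff)
    next
      case True
      show ?thesis
      proof (cases "j = 0")
        case True
        then have "j \<notin> set u" "j \<notin> set t" using pl pm by auto
        then show ?thesis using cw \<open>j < l\<close> by (metis count_mset_0_iff)
      next
        case False
        then have "j \<in> {1..n}" using \<open>j < l\<close> lm by auto
        have a1: "cnt l j \<le> cnt m j" using le \<open>j \<in> {1..n}\<close> by blast
        have a2: "\<not> cnt l j < cnt m j" using st \<open>j \<in> {1..n}\<close> \<open>j < l\<close> by auto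
        have "cnt l j = cnt m j" using a1 a2 by linarith
        then show ?thesis using cw \<open>j < l\<close> by (simp add: cnt_mset t_u_def)
      qed
    qed
  qed
  moreover have "sorted w" using pm w_def by (simp add: sorted_wrt_filter)
  ultimately have wu: "w = u"
    using properties_for_sort[of w u] sorted_sort_id[of u] pl by metis
  define d where "d = dropWhile (\<lambda>q. q < l) t"
  have tw: "takeWhile (\<lambda>q. q < l) t = u" using wu w_def filter_takeWhile[OF pm(3)] by simp
  have "t = takeWhile (\<lambda>q. q < l) t @ d" unfolding d_def by simp
  then have "t = u @ d" unfolding tw .
  then have eq: "hs m = hs l @ d"
    using pm(1) pl(1) hd t_u_def by (metis append_Cons list.collapse)
  have "d = []"
  proof (rule ccontr)
    assume dn: "d \<noteq> []"
    then have "hd d < l" using hs_prefix[OF lm(3,4,1,2) eq] by auto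
    moreover have "\<not> hd d < l" using dn d_def hd_dropWhile by metis
    ultimately show False by simp
  qed
  then show ?thesis using eq hs_inj[of m l] lm by simp
qed

end


definition Zs :: "nat \<Rightarrow> point set" where
  "Zs j = {y. \<forall>i. 1 \<le> i \<and> i < j \<longrightarrow> y i = 0}"

definition ev :: "nat \<Rightarrow> point" where "ev l = (\<lambda>m. if m = l then 1 else 0)"

lemma Zs_mono: "i \<le> j \<Longrightarrow> Zs j \<subseteq> Zs i" unfolding Zs_def by auto

lemma Zs_upd: "y \<in> Zs j \<Longrightarrow> j \<le> k \<Longrightarrow> y(k := t) \<in> Zs j" unfolding Zs_def by auto

context HB
begin

definition Q :: "nat \<Rightarrow> point \<Rightarrow> point" where
  "Q l y m = (if 1 \<le> m \<and> m \<le> n \<and> hd (hs m) = hd (hs l) \<and> (\<forall>j\<in>{1..n}. cnt l j \<le> cnt m j)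
     then (-1) ^ (\<Sum>j=1..n. cnt m j - cnt l j) / (\<Prod>j=1..n. fact (cnt m j - cnt l j))
       * (\<Prod>j=1..n. y j ^ (cnt m j - cnt l j))
     else 0)"

lemma cnt_in: "1 \<le> m \<Longrightarrow> m \<le> n \<Longrightarrow> 0 < cnt m j \<Longrightarrow> 1 \<le> j \<and> j < m"
  using hs_props[of m] by (auto simp: cnt_mset)

lemma gen_Q: "i \<in> {1..r} \<Longrightarrow> X i = Q i"
proof -
  assume i: "i \<in> {1..r}"
  have Xi: "X i = hgg_gen r n P i" using hf i unfolding hgg_fields_def by auto
  have c0: "cnt i j = 0" for j using i by (simp add: hall_I_def hs_gen)
  have pr: "hall_prec r P i m \<longleftrightarrow> hd (hs m) = i" if "1 \<le> m" "m \<le> n" for m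
  proof -
    have "hs m \<noteq> []" using hs_props that by auto
    then show ?thesis using i unfolding hall_prec_def by (cases "hs m") (auto simp: hs_gen)
  qed
  have hi: "hs i = [i]" using i by (simp add: hs_gen)
  show ?thesis unfolding Xi
  proof (intro ext)
    fix y m
    show "hgg_gen r n P i y m = Q i y m"
    proof (cases "1 \<le> m \<and> m \<le> n")
      case True thus ?thesis using pr[of m] by (simp add: hgg_gen_def Q_def c0 hi)
    next
      case False
      have "hgg_gen r n P i y m = 0" unfolding hgg_gen_def by (rule if_not_P) (use False in auto)
      moreover have "Q i y m = 0" unfolding Q_def by (rule if_not_P) (use False in auto)
      ultimately show ?thesis by simp
    qed
  qed
qed

lemma Q_I1:
  assumes l: "1 \<le> l" "l \<le> n" and y: "y \<in> Zs l"
  shows "Q l y = ev l"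
proof
  fix m
  show "Q l y m = ev l m"
  proof (cases "m = l")
    case True then show ?thesis using l by (simp add: Q_def ev_def)
  next
    case False
    show ?thesis
    proof (cases "1 \<le> m \<and> m \<le> n \<and> hd (hs m) = hd (hs l) \<and> (\<forall>j\<in>{1..n}. cnt l j \<le> cnt m j)")
      case c: True
      have "\<exists>j\<in>{1..n}. cnt l j < cnt m j \<and> j < l"
      proof (rule ccontr)
        assume "\<not> ?thesis"
        then have "\<forall>j\<in>{1..n}. cnt l j < cnt m j \<longrightarrow> l \<le> j" by auto
        then have "m = l" using K2[of l m] c l by auto
        then show False using False by simp
      qed
      then obtain j where j: "j \<in> {1..n}" "cnt l j < cnt m j" "j < l" by auto
      have "y j ^ (cnt m j - cnt l j) = 0" using j y unfolding Zs_def by auto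
      then have "(\<Prod>j=1..n. y j ^ (cnt m j - cnt l j)) = 0"
        using j by (intro prod_zero) auto
      then show ?thesis using False by (simp add: Q_def ev_def)
    next
      case False
      have "Q l y m = 0" unfolding Q_def using False by (rule if_not_P)
      then show ?thesis using \<open>m \<noteq> l\<close> by (simp add: ev_def)
    qed
  qed
qed

lemma Q_tang:
  assumes a: "1 \<le> a" "a \<le> n" and k: "1 \<le> k" "k < b" "b < a" and y: "y \<in> Zs b"
  shows "Q a y k = 0"
proof (cases "1 \<le> k \<and> k \<le> n \<and> hd (hs k) = hd (hs a) \<and> (\<forall>j\<in>{1..n}. cnt a j \<le> cnt k j)")
  case c: True
  show ?thesis
  proof (cases "\<exists>j\<in>{1..n}. cnt a j < cnt k j")
    case True
    then obtain j where j: "j \<in> {1..n}" "cnt a j < cnt k j" by auto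
    then have "j < k" using cnt_in[of k j] c by auto
    then have "y j ^ (cnt k j - cnt a j) = 0" using j y k unfolding Zs_def by auto
    then have "(\<Prod>j=1..n. y j ^ (cnt k j - cnt a j)) = 0"
      using j by (intro prod_zero) auto
    then show ?thesis by (simp add: Q_def)
  next
    case False
    then have "k = a" using K2[of a k] c a by auto
    then show ?thesis using k by simp
  qed
qed (auto simp: Q_def)

end


lemma canc: "(c::real) \<noteq> 0 \<Longrightarrow> x / (c * d) * c = x / d"
  by (simp add: field_simps)

context HB
begin

lemma Q_deriv:
  assumes a: "1 \<le> a" "a \<le> n" and b: "1 \<le> b" "b \<le> n" and e: "hs l = hs a @ [b]"
  shows "deriv (\<lambda>t. Q a (y(b:=t)) m) (y b) = - Q l y m"
proof -
  have ne: "hs a \<noteq> []" using hs_props a by auto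
  have cl: "cnt l j = cnt a j + (if j = b then 1 else 0)" for j
    using ne e by (cases "hs a") (auto simp: hall_I_def)
  have hdl: "hd (hs l) = hd (hs a)" using ne e by (cases "hs a") auto
  have bin: "b \<in> {1..n}" using b by auto
  let ?condA = "1 \<le> m \<and> m \<le> n \<and> hd (hs m) = hd (hs a) \<and> (\<forall>j\<in>{1..n}. cnt a j \<le> cnt m j)"
  let ?condL = "1 \<le> m \<and> m \<le> n \<and> hd (hs m) = hd (hs l) \<and> (\<forall>j\<in>{1..n}. cnt l j \<le> cnt m j)"
  show ?thesis
  proof (cases ?condA)
    case False
    have "Q a (y(b:=t)) m = 0" for t unfolding Q_def by (rule if_not_P) (rule False)
    then have "(\<lambda>t. Q a (y(b:=t)) m) = (\<lambda>t. 0)" by auto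
    moreover have "\<not> ?condL" using False cl hdl by (auto, force)
    then have "Q l y m = 0" unfolding Q_def by (rule if_not_P)
    ultimately show ?thesis by simp
  next
    case cA: True
    define E where "E j = cnt m j - cnt a j" for j
    define C where "C = (-1::real) ^ (\<Sum>j=1..n. E j) / (\<Prod>j=1..n. fact (E j))"
    define K where "K = (\<Prod>j\<in>{1..n}-{b}. y j ^ E j)"
    have pr: "(\<Prod>j=1..n. (y(b:=t)) j ^ E j) = t ^ E b * K" for t
    proof -
      have "(\<Prod>j=1..n. (y(b:=t)) j ^ E j) = (y(b:=t)) b ^ E b * (\<Prod>j\<in>{1..n}-{b}. (y(b:=t)) j ^ E j)"
        using bin by (simp add: prod.remove)
      also have "(\<Prod>j\<in>{1..n}-{b}. (y(b:=t)) j ^ E j) = K"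
        unfolding K_def by (intro prod.cong) auto
      finally show ?thesis by simp
    qed
    have qa: "Q a (y(b:=t)) m = C * (\<Prod>j=1..n. (y(b:=t)) j ^ E j)" for t
      unfolding Q_def C_def E_def by (rule if_P) (rule cA)
    have "Q a (y(b:=t)) m = (C * K) * t ^ E b" for t
      unfolding qa pr by (simp add: algebra_simps)
    then have fA: "(\<lambda>t. Q a (y(b:=t)) m) = (\<lambda>t. (C * K) * t ^ E b)" by auto
    have "((\<lambda>t. (C * K) * t ^ E b) has_real_derivative (C * K) * (real (E b) * y b ^ (E b - Suc 0))) (at (y b))"
      by (intro DERIV_cmult DERIV_pow)
    then have dv: "deriv (\<lambda>t. Q a (y(b:=t)) m) (y b) = (C * K) * (real (E b) * y b ^ (E b - Suc 0))"
      unfolding fA by (rule DERIV_imp_deriv)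
    show ?thesis
    proof (cases "E b = 0")
      case True
      then have "\<not> ?condL" using cl[of b] bin unfolding E_def by force
      then have "Q l y m = 0" unfolding Q_def by (rule if_not_P)
      then show ?thesis using dv True by simp
    next
      case False
      then obtain k where k: "E b = Suc k" by (cases "E b") auto
      have cL: ?condL using cA cl hdl False unfolding E_def by auto
      define E' where "E' j = cnt m j - cnt l j" for j
      have E'j: "E' j = (if j = b then k else E j)" for j
        using k cl[of j] unfolding E'_def E_def by auto
      define S where "S = (\<Sum>j\<in>{1..n}-{b}. E j)"
      define R where "R = (\<Prod>j\<in>{1..n}-{b}. fact (E j) :: real)"
      have sE: "(\<Sum>j=1..n. E j) = Suc k + S" using bin k unfolding S_def by (simp add: sum.remove)
      have sE': "(\<Sum>j=1..n. E' j) = k + S"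
      proof -
        have "(\<Sum>j=1..n. E' j) = E' b + (\<Sum>j\<in>{1..n}-{b}. E' j)" using bin by (simp add: sum.remove)
        also have "(\<Sum>j\<in>{1..n}-{b}. E' j) = S" unfolding S_def by (intro sum.cong) (auto simp: E'j)
        finally show ?thesis by (simp add: E'j)
      qed
      have pE: "(\<Prod>j=1..n. fact (E j) :: real) = fact (Suc k) * R" using bin k unfolding R_def by (simp add: prod.remove)
      have pE': "(\<Prod>j=1..n. fact (E' j) :: real) = fact k * R"
      proof -
        have "(\<Prod>j=1..n. fact (E' j) :: real) = fact (E' b) * (\<Prod>j\<in>{1..n}-{b}. fact (E' j))" using bin by (simp add: prod.remove)
        also have "(\<Prod>j\<in>{1..n}-{b}. fact (E' j) :: real) = R" unfolding R_def by (intro prod.cong) (auto simp: E'j)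
        finally show ?thesis by (simp add: E'j)
      qed
      have pY: "(\<Prod>j=1..n. y j ^ E' j) = y b ^ k * K"
      proof -
        have "(\<Prod>j=1..n. y j ^ E' j) = y b ^ E' b * (\<Prod>j\<in>{1..n}-{b}. y j ^ E' j)" using bin by (simp add: prod.remove)
        also have "(\<Prod>j\<in>{1..n}-{b}. y j ^ E' j) = K" unfolding K_def by (intro prod.cong) (auto simp: E'j)
        finally show ?thesis by (simp add: E'j)
      qed
      have QL: "Q l y m = (-1) ^ (k + S) / (fact k * R) * (y b ^ k * K)"
      proof -
        have "Q l y m = (-1) ^ (\<Sum>j=1..n. E' j) / (\<Prod>j=1..n. fact (E' j)) * (\<Prod>j=1..n. y j ^ E' j)"
          unfolding Q_def E'_def by (rule if_P) (rule cL)
        then show ?thesis unfolding sE' pE' pY .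
      qed
      have Rpos: "R > 0" unfolding R_def by (intro prod_pos) auto
      have Ceq: "C = (-1) ^ (Suc k + S) / (fact (Suc k) * R)" unfolding C_def sE pE by simp
      have fs: "(fact (Suc k)::real) = of_nat (Suc k) * fact k" by (rule fact_Suc)
      have pw: "(-1::real) ^ (Suc k + S) = - ((-1) ^ (k + S))" by simp
      have fk: "(fact k :: real) > 0" by simp
      have C2: "C * of_nat (Suc k) = - ((-1) ^ (k + S)) / (fact k * R)"
      proof -
        have "C * of_nat (Suc k) = (- ((-1) ^ (k + S))) / (of_nat (Suc k) * (fact k * R)) * of_nat (Suc k)"
          unfolding Ceq fs pw by (simp only: mult.assoc)
        also have "\<dots> = - ((-1) ^ (k + S)) / (fact k * R)" by (rule canc) simp
        finally show ?thesis .
      qed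
      have "deriv (\<lambda>t. Q a (y(b:=t)) m) (y b) = (C * of_nat (Suc k)) * (y b ^ k * K)"
        unfolding dv k by (simp add: algebra_simps)
      also have "\<dots> = - Q l y m" unfolding C2 QL by (simp add: algebra_simps)
      finally show ?thesis .

    qed
  qed
qed

end


definition dep :: "vfield \<Rightarrow> bool" where
  "dep V \<longleftrightarrow> (\<forall>k y y'. (\<forall>j. 1 \<le> j \<and> j < k \<longrightarrow> y j = y' j) \<longrightarrow> V y k = V y' k)"

lemma pdiff_const: "(\<And>t. f (y(m:=t)) = c) \<Longrightarrow> pdiff m f y = 0"
proof -
  assume "\<And>t. f (y(m:=t)) = c"
  then have "(\<lambda>t. f (y(m:=t))) = (\<lambda>t. c)" by auto
  then show ?thesis unfolding pdiff_def by simp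
qed

lemma dep_bracket:
  assumes A: "dep A" and B: "dep B" shows "dep (lie_bracket n A B)"
  unfolding dep_def
proof (intro allI impI)
  fix k y y' assume ag: "\<forall>j. 1 \<le> j \<and> j < k \<longrightarrow> y j = (y' :: point) j"
  have "A y m * pdiff m (\<lambda>z. B z k) y - B y m * pdiff m (\<lambda>z. A z k) y
      = A y' m * pdiff m (\<lambda>z. B z k) y' - B y' m * pdiff m (\<lambda>z. A z k) y'" if m: "m \<in> {1..n}" for m
  proof (cases "k \<le> m")
    case True
    have z: "pdiff m (\<lambda>z. V z k) w = 0" if "dep V" for V :: vfield and w
      by (rule pdiff_const[where c = "V w k"]) (use that True in \<open>auto simp: dep_def\<close>)
    show ?thesis using z[OF A] z[OF B] by simp
  next
    case False
    have a1: "A y m = A y' m" "B y m = B y' m"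
      using A B ag False unfolding dep_def by auto
    have p: "pdiff m (\<lambda>z. V z k) y = pdiff m (\<lambda>z. V z k) y'" if "dep V" for V :: vfield
    proof -
      have "(\<lambda>t. V (y(m:=t)) k) = (\<lambda>t. V (y'(m:=t)) k)"
        using that ag False unfolding dep_def by (intro ext) (metis fun_upd_apply)
      moreover have "y m = y' m" using ag False m by auto
      ultimately show ?thesis unfolding pdiff_def by simp
    qed
    show ?thesis using a1 p[OF A] p[OF B] by simp
  qed
  then show "lie_bracket n A B y k = lie_bracket n A B y' k"
    unfolding lie_bracket_def by (intro sum.cong) auto
qed

lemma ode_unique:
  fixes V :: vfield and \<gamma> \<gamma>' :: "real \<Rightarrow> point"
  assumes dV: "dep V" and S: "S = {min 0 t..max 0 t}"
    and g0: "\<gamma> 0 = p" "\<gamma>' 0 = p"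
    and d1: "\<forall>\<tau>\<in>S. \<forall>k. ((\<lambda>\<sigma>. \<gamma> \<sigma> k) has_real_derivative V (\<gamma> \<tau>) k) (at \<tau> within S)"
    and d2: "\<forall>\<tau>\<in>S. \<forall>k. ((\<lambda>\<sigma>. \<gamma>' \<sigma> k) has_real_derivative V (\<gamma>' \<tau>) k) (at \<tau> within S)"
  shows "\<forall>\<sigma>\<in>S. \<gamma> \<sigma> k = \<gamma>' \<sigma> k"
proof (induction k rule: less_induct)
  case (less k)
  have eqV: "V (\<gamma> \<tau>) k = V (\<gamma>' \<tau>) k" if "\<tau> \<in> S" for \<tau>
    using dV less.IH that unfolding dep_def by auto
  have "((\<lambda>\<sigma>. \<gamma> \<sigma> k - \<gamma>' \<sigma> k) has_real_derivative 0) (at \<tau> within S)" if "\<tau> \<in> S" for \<tau>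
    using DERIV_diff[OF d1[rule_format, OF that, of k] d2[rule_format, OF that, of k]] eqV[OF that]
    by simp
  then obtain c where c: "\<forall>x\<in>S. \<gamma> x k - \<gamma>' x k = c"
    using has_field_derivative_zero_constant[of S "\<lambda>\<sigma>. \<gamma> \<sigma> k - \<gamma>' \<sigma> k"] S by auto
  have "0 \<in> S" using S by auto
  then have "c = 0" using c g0 by force
  then show ?case using c by auto
qed

lemma flow_straight:
  fixes V :: vfield
  assumes dV: "dep V" and VZ: "\<forall>y\<in>Zs i. V y = ev i" and p: "p \<in> Zs i"
  shows "flow V t p = p(i := p i + t)"
  unfolding flow_def
proof (rule the_equality)
  define S where "S = {min 0 t..max 0 t}"
  define \<gamma> where "\<gamma> = (\<lambda>\<sigma>::real. p(i := p i + \<sigma>))"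
  have der: "\<forall>\<tau>\<in>S. \<forall>k. ((\<lambda>\<sigma>. \<gamma> \<sigma> k) has_real_derivative V (\<gamma> \<tau>) k) (at \<tau> within S)"
  proof (intro ballI allI)
    fix \<tau> k assume "\<tau> \<in> S"
    have "\<gamma> \<tau> \<in> Zs i" unfolding \<gamma>_def using Zs_upd[OF p] by auto
    then have Vg: "V (\<gamma> \<tau>) k = ev i k" using VZ by auto
    have "((\<lambda>\<sigma>. \<gamma> \<sigma> k) has_real_derivative ev i k) (at \<tau> within S)"
    proof (cases "k = i")
      case True
      then have "(\<lambda>\<sigma>. \<gamma> \<sigma> k) = (\<lambda>\<sigma>. p i + \<sigma>)" by (auto simp: \<gamma>_def)
      then show ?thesis using True by (auto simp: ev_def intro!: derivative_eq_intros)
    next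
      case False
      then have "(\<lambda>\<sigma>. \<gamma> \<sigma> k) = (\<lambda>\<sigma>. p k)" by (auto simp: \<gamma>_def)
      then show ?thesis using False by (auto simp: ev_def intro!: derivative_eq_intros)
    qed
    then show "((\<lambda>\<sigma>. \<gamma> \<sigma> k) has_real_derivative V (\<gamma> \<tau>) k) (at \<tau> within S)"
      using Vg by simp
  qed
  show "\<exists>\<gamma>. \<gamma> 0 = p \<and> \<gamma> t = p(i := p i + t) \<and>
      (\<forall>\<tau>\<in>{min 0 t..max 0 t}. \<forall>k. ((\<lambda>\<sigma>. \<gamma> \<sigma> k) has_real_derivative V (\<gamma> \<tau>) k) (at \<tau> within {min 0 t..max 0 t}))"
    using der unfolding S_def by (intro exI[of _ \<gamma>]) (auto simp: \<gamma>_def)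
  fix q assume "\<exists>\<gamma>'. \<gamma>' 0 = p \<and> \<gamma>' t = q \<and>
      (\<forall>\<tau>\<in>{min 0 t..max 0 t}. \<forall>k. ((\<lambda>\<sigma>. \<gamma>' \<sigma> k) has_real_derivative V (\<gamma>' \<tau>) k) (at \<tau> within {min 0 t..max 0 t}))"
  then obtain \<gamma>' where g': "\<gamma>' 0 = p" "\<gamma>' t = q"
    "\<forall>\<tau>\<in>S. \<forall>k. ((\<lambda>\<sigma>. \<gamma>' \<sigma> k) has_real_derivative V (\<gamma>' \<tau>) k) (at \<tau> within S)"
    unfolding S_def by auto
  have "t \<in> S" unfolding S_def by auto
  have "\<gamma> t k = \<gamma>' t k" for k
    using ode_unique[OF dV S_def _ g'(1) der g'(3), of k] \<open>t \<in> S\<close> by (auto simp: \<gamma>_def)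
  then show "q = p(i := p i + t)" using g'(2) unfolding \<gamma>_def by auto
qed

context HB
begin

lemma dep_Q: "dep (Q l)"
  unfolding dep_def
proof (intro allI impI)
  fix k y y' assume ag: "\<forall>j. 1 \<le> j \<and> j < k \<longrightarrow> y j = (y' :: point) j"
  show "Q l y k = Q l y' k"
  proof (cases "1 \<le> k \<and> k \<le> n")
    case True
    have "(\<Prod>j=1..n. y j ^ (cnt k j - cnt l j)) = (\<Prod>j=1..n. y' j ^ (cnt k j - cnt l j))"
    proof (intro prod.cong refl)
      fix j assume j: "j \<in> {1..n}"
      show "y j ^ (cnt k j - cnt l j) = y' j ^ (cnt k j - cnt l j)"
      proof (cases "cnt k j - cnt l j = 0")
        case False
        then have "j < k" using cnt_in[of k j] True by auto
        then show ?thesis using ag j by auto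
      qed simp
    qed
    then show ?thesis unfolding Q_def by simp
  qed (auto simp: Q_def)
qed

lemma X_br: "l \<in> {r<..n} \<Longrightarrow> X l = lie_bracket n (X (fst (P l))) (X (snd (P l)))"
  using hf unfolding hgg_fields_def by auto

lemma dep_X: "1 \<le> l \<Longrightarrow> l \<le> n \<Longrightarrow> dep (X l)"
proof (induction l rule: less_induct)
  case (less l)
  show ?case
  proof (cases "l \<le> r")
    case True then show ?thesis using gen_Q[of l] dep_Q less.prems by auto
  next
    case False
    then show ?thesis using X_br[of l] pair_facts[of l] less.prems less.IH
      by (auto intro!: dep_bracket)
  qed
qed

definition cc where "cc l = (if l \<le> r then 1 else snd (P l))"

lemma cc_le: "1 \<le> l \<Longrightarrow> l \<le> n \<Longrightarrow> cc l \<le> l"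
  using pair_facts[of l] unfolding cc_def by auto

lemma XQ: "1 \<le> l \<Longrightarrow> l \<le> n \<Longrightarrow> \<forall>y\<in>Zs (cc l). X l y = Q l y"
proof (induction l rule: less_induct)
  case (less l)
  show ?case
  proof (cases "l \<le> r")
    case True then show ?thesis using gen_Q[of l] less.prems by auto
  next
    case False
    define a b where "a = fst (P l)" "b = snd (P l)"
    have f: "b < a" "a < l" "1 \<le> b" "r < a \<Longrightarrow> snd (P a) \<le> b"
      using pair_facts[of l] False less.prems unfolding a_b_def by auto
    have ccl: "cc l = b" using False a_b_def cc_def by auto
    have cca: "cc a \<le> b" using f unfolding cc_def by auto
    have IHa: "\<forall>y\<in>Zs (cc a). X a y = Q a y" using less.IH[of a] f less.prems by auto
    have IHb: "\<forall>y\<in>Zs (cc b). X b y = Q b y" using less.IH[of b] f less.prems by auto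
    have I1b: "X b y = ev b" if "y \<in> Zs b" for y
      using IHb Zs_mono[OF cc_le[of b]] Q_I1[of b y] that f less.prems by auto
    have tang: "X a y k = 0" if "y \<in> Zs b" "1 \<le> k" "k < b" for y k
    proof -
      have "y \<in> Zs (cc a)" using that Zs_mono[OF cca] by auto
      then show ?thesis using IHa Q_tang[of a k b y] that f less.prems by auto
    qed
    have Xl: "X l = lie_bracket n (X a) (X b)" using X_br[of l] False less.prems a_b_def by auto
    have hsl: "hs l = hs a @ [b]" using hs_br[of l] False less.prems a_b_def by auto
    show ?thesis
    proof (intro ballI ext)
      fix y m assume y: "y \<in> Zs (cc l)"
      then have yb: "y \<in> Zs b" using ccl by simp
      have "X l y m = (\<Sum>k=1..n. if k = b then - pdiff b (\<lambda>z. X a z m) y else 0)"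
        unfolding Xl lie_bracket_def
      proof (intro sum.cong refl)
        fix k assume k: "k \<in> {1..n}"
        have t1: "X a y k * pdiff k (\<lambda>z. X b z m) y = 0"
        proof (cases "k < b")
          case True then show ?thesis using tang[OF yb] k by auto
        next
          case False
          have "pdiff k (\<lambda>z. X b z m) y = 0"
          proof (rule pdiff_const[where c = "ev b m"])
            fix t
            have "y(k := t) \<in> Zs b" using Zs_upd[OF yb] False by simp
            then show "X b (y(k := t)) m = ev b m" using I1b by simp
          qed
          then show ?thesis by simp
        qed
        show "X a y k * pdiff k (\<lambda>z. X b z m) y - X b y k * pdiff k (\<lambda>z. X a z m) y
          = (if k = b then - pdiff b (\<lambda>z. X a z m) y else 0)"
          using t1 I1b[OF yb] by (auto simp: ev_def)
      qed
      also have "\<dots> = - pdiff b (\<lambda>z. X a z m) y"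
      proof -
        have "b \<in> {1..n}" using f less.prems by auto
        then show ?thesis by (simp add: sum.delta)
      qed
      also have "pdiff b (\<lambda>z. X a z m) y = deriv (\<lambda>t. Q a (y(b:=t)) m) (y b)"
      proof -
        have "(\<lambda>t. X a (y(b:=t)) m) = (\<lambda>t. Q a (y(b:=t)) m)"
        proof (intro ext)
          fix t
          have "y(b:=t) \<in> Zs (cc a)" using Zs_upd[OF yb order_refl] Zs_mono[OF cca] by blast
          then show "X a (y(b:=t)) m = Q a (y(b:=t)) m" using IHa by simp
        qed
        then show ?thesis unfolding pdiff_def by simp
      qed
      also have "\<dots> = - Q l y m" using Q_deriv[OF _ _ _ _ hsl] f less.prems by auto
      finally show "X l y m = Q l y m" by simp
    qed
  qed
qed

lemma I1: "1 \<le> l \<Longrightarrow> l \<le> n \<Longrightarrow> y \<in> Zs l \<Longrightarrow> X l y = ev l"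
  using XQ[of l] Zs_mono[OF cc_le[of l]] Q_I1[of l y] by auto

lemma fold_main:
  assumes "1 \<le> i" "i \<le> n + 1"
  shows "foldr (\<lambda>i p. flow (X i) (x i) p) [i..<n+1] (\<lambda>_. 0) = (\<lambda>j. if i \<le> j \<and> j \<le> n then x j else 0)"
  using assms(2,1)
proof (induction i rule: inc_induct)
  case base then show ?case by auto
next
  case (step k)
  define p where "p = (\<lambda>j. if Suc k \<le> j \<and> j \<le> n then x j else 0)"
  have p: "p \<in> Zs k" unfolding p_def Zs_def by auto
  have "foldr (\<lambda>i p. flow (X i) (x i) p) [k..<n+1] (\<lambda>_. 0) = flow (X k) (x k) p"
    using step by (simp add: upt_conv_Cons p_def del: upt_Suc)
  also have "\<dots> = p(k := p k + x k)"
  proof -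
    have "\<forall>y\<in>Zs k. X k y = ev k" using I1[of k] step by auto
    then show ?thesis using flow_straight[of "X k" k p "x k"] dep_X[of k] p step by auto
  qed
  also have "\<dots> = (\<lambda>j. if k \<le> j \<and> j \<le> n then x j else 0)"
    using step unfolding p_def by (auto simp: fun_eq_iff)
  finally show ?case .
qed

end

theorem proposition3p5:
  fixes r s n :: nat and P :: "nat \<Rightarrow> nat \<times> nat" and X :: "nat \<Rightarrow> vfield"
    and x :: point
  assumes "2 \<le> r" and "2 \<le> s"
    and "hall_basis r s n P"
    and "hgg_fields r n P X"
  shows "\<forall>l\<in>{1..n}. hgg_Psi n X x l = x l"
proof -
  interpret HB r s n P X using assms by unfold_locales auto
  show ?thesis unfolding hgg_Psi_def using fold_main[of 1 x] by auto
qed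

end
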